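(* Let $\lambda\ge0$, $\delta>0$, $0<a<b$, let $\rho_c$ and $D$ be as in the context, let $0\le\eta<\infty$, let $Q$ be regular superadditive, and let $q\colon\mathbb{R}\times\mathbb{R}\to[0,\infty]$ be measurable. Assume that for all $s<t$ and $x<y$, $$D\int_s^t\int_{\mathbb{R}}\Big[\rho_{b-a}(s,x,u,z)+\rho_a(u,z,t,y)\Big]q(u,z)\,dz\,du\le\eta+Q(s,t).$$ Then $q\in\mathcal N(\rho_b,\rho_a,(b/a)^{1/2},\eta,Q)$.
   Context: For $t>0$, $z\in\mathbb{R}$ let $p(t,z)=(4\pi)^{-1/2}\delta t z^{-3/2}\exp\{-(\delta t-2\sqrt{\lambda}z)^2/(4z)\}\mathbf 1_{z>0}$; for $c>0$, $\rho_c(s,x,t,y)=c\,p(c(t-s),c(y-x))$ if $s<t$ and $0$ otherwise. $D=\left(\frac{b}{b-a}\right)^{3/2}\exp[\frac32 l(\frac{a}{b-a})]$ with $l(\alpha)=\max_{\tau\ge\alpha\vee1/\alpha}[\ln(1+\tau)-\frac{\tau-\alpha}{1+\tau}\ln(\alpha\tau)]$. $Q\colon\{(s,t):s<t\}\to[0,\infty)$ is regular superadditive if $Q(s,u)+Q(u,t)\le Q(s,t)$ for $s<u<t$ and $Q(s,t)$ is right-continuous in $s$ and left-continuous in $t$. For transition densities $p,p^*$ on $\mathbb{R}$, $C\ge1$, $\eta\in[0,\infty)$ and regular superadditive $Q$, we write $q\in\mathcal N(p,p^*,C,\eta,Q)$ if $q\ge0$ is measurable on $\mathbb{R}\times\mathbb{R}$,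 $\int_s^t\int_{\mathbb{R}}p(s,x,u,z)q(u,z)p^*(u,z,t,y)\,dz\,du\le[\eta+Q(s,t)]p^*(s,x,t,y)$ for all $s<t$, $x,y$, and $p\le Cp^*$ everywhere. *)

theory Defs
  imports "HOL-Analysis.Analysis"
begin

definition pdens :: "real \<Rightarrow> real \<Rightarrow> real \<Rightarrow> real \<Rightarrow> real" where
  "pdens lam del t z =
     (if z > 0 then (4 * pi) powr (-1/2) * del * t * z powr (-3/2)
        * exp (- ((del * t - 2 * sqrt lam * z)\<^sup>2) / (4 * z)) else 0)"

definition rho :: "real \<Rightarrow> real \<Rightarrow> real \<Rightarrow> real \<Rightarrow> real \<Rightarrow> real \<Rightarrow> real \<Rightarrow> real" where
  "rho lam del c s x t y = (if s < t then c * pdens lam del (c * (t - s)) (c * (y - x)) else 0)"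

definition lfun :: "real \<Rightarrow> real" where
  "lfun \<alpha> = Sup {ln (1 + \<tau>) - (\<tau> - \<alpha>) / (1 + \<tau>) * ln (\<alpha> * \<tau>) | \<tau>. \<tau> \<ge> max \<alpha> (1 / \<alpha>)}"

definition Dconst :: "real \<Rightarrow> real \<Rightarrow> real" where
  "Dconst a b = (b / (b - a)) powr (3/2) * exp (3/2 * lfun (a / (b - a)))"

definition regular_superadditive :: "(real \<Rightarrow> real \<Rightarrow> real) \<Rightarrow> bool" where
  "regular_superadditive Q \<longleftrightarrow>
     (\<forall>s t. s < t \<longrightarrow> Q s t \<ge> 0) \<and>
     (\<forall>s u t. s < u \<and> u < t \<longrightarrow> Q s u + Q u t \<le> Q s t) \<and>
     (\<forall>s t. s < t \<longrightarrow> continuous (at_right s) (\<lambda>s'. Q s' t)) \<and>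
     (\<forall>s t. s < t \<longrightarrow> continuous (at_left t) (\<lambda>t'. Q s t'))"

definition classN ::
  "(real \<Rightarrow> real \<Rightarrow> real \<Rightarrow> real \<Rightarrow> real) \<Rightarrow> (real \<Rightarrow> real \<Rightarrow> real \<Rightarrow> real \<Rightarrow> real)
   \<Rightarrow> real \<Rightarrow> real \<Rightarrow> (real \<Rightarrow> real \<Rightarrow> real) \<Rightarrow> (real \<Rightarrow> real \<Rightarrow> ennreal) \<Rightarrow> bool" where
  "classN p ps C \<eta> Q q \<longleftrightarrow>
     C \<ge> 1 \<and> \<eta> \<ge> 0 \<and> regular_superadditive Q \<and>
     (\<lambda>(u, z). q u z) \<in> borel_measurable borel \<and>
     (\<forall>s t x y. s < t \<longrightarrow>
        (\<integral>\<^sup>+ u. (\<integral>\<^sup>+ z. ennreal (p s x u z) * q u z * ennreal (ps u z t y) \<partial>lborel)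
                    * indicator {s<..<t} u \<partial>lborel)
        \<le> ennreal (\<eta> + Q s t) * ennreal (ps s x t y)) \<and>
     (\<forall>s x t y. p s x t y \<le> C * ps s x t y)"

end

theory Submission
  imports Defs "HOL-Analysis.Analysis"
begin


lemma core:
  fixes a b T1 T2 Z1 Z2 A1 A2 M :: real
  assumes a: "0<a" "a<b" and pos: "T1>0" "T2>0" "Z1>0" "Z2>0"
    and M: "M \<ge> b/(b-a)" "M \<ge> b/a"
  shows "1 \<le> ((b/(b-a)) powr (3/2) * M powr (3/2)) *
     (sqrt((b-a)/b)*((T1+T2)/T2)*(Z2/(Z1+Z2)) powr (3/2) * exp(a*(A1\<^sup>2/Z1+A2\<^sup>2/Z2-(A1+A2)\<^sup>2/(Z1+Z2))/4)
      + sqrt(a/b)*((T1+T2)/T1)*(Z1/(Z1+Z2)) powr (3/2)*exp((b*(A1\<^sup>2/Z1) - a*((A1+A2)\<^sup>2/(Z1+Z2)))/4))"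
proof -
  define Z where "Z = Z1+Z2"
  define w1 where "w1 = A1\<^sup>2/Z1"
  define w2 where "w2 = A2\<^sup>2/Z2"
  define w where "w = (A1+A2)\<^sup>2/Z"
  define E1 where "E1 = a*(w1+w2-w)/4"
  define E2 where "E2 = (b*w1 - a*w)/4"
  define r where "r = (b-a)/b"
  define \<beta> where "\<beta> = a/b"
  define \<theta> where "\<theta> = Z2/Z"
  define D0 where "D0 = (b/(b-a)) powr (3/2) * M powr (3/2)"
  have Z: "Z > 0" using pos by (simp add: Z_def)
  have r: "0 < r" "r < 1" using a by (auto simp: r_def field_simps)
  have be: "0 < \<beta>" "\<beta> < 1" "\<beta> = 1 - r" using a by (auto simp: \<beta>_def r_def field_simps)
  have th: "0 < \<theta>" "\<theta> < 1" "Z1/Z = 1 - \<theta>" using pos by (auto simp: \<theta>_def Z_def field_simps)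
  have Mr: "M \<ge> 1/r" and Mb: "M \<ge> 1/\<beta>" using M a by (auto simp: r_def \<beta>_def)
  have "1/r > 0" using r by simp
  then have Mpos: "M > 0" using Mr by linarith
  have D0pos: "D0 > 0" using a Mpos by (simp add: D0_def)
  have M2: "M \<ge> 2"
  proof (cases "r \<le> 1/2")
    case True then have "1/r \<ge> 2" using r by (simp add: field_simps)
    then show ?thesis using Mr by linarith
  next
    case False then have "\<beta> \<le> 1/2" using be by simp
    then have "1/\<beta> \<ge> 2" using be by (simp add: field_simps)
    then show ?thesis using Mb by linarith
  qed
  have hw: "w \<le> w1 + w2"
  proof -
    have "(A1+A2)\<^sup>2/Z \<le> A1\<^sup>2/Z1 + A2\<^sup>2/Z2"
    proof -
      have "A1\<^sup>2/Z1 + A2\<^sup>2/Z2 - (A1+A2)\<^sup>2/Z = (A1*Z2 - A2*Z1)\<^sup>2/(Z1*Z2*Z)"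
        using pos Z unfolding Z_def by (simp add: divide_simps) (simp add: power2_eq_square algebra_simps)
      also have "\<dots> \<ge> 0" using pos Z by simp
      finally show ?thesis by simp
    qed
    then show ?thesis by (simp add: w_def w1_def w2_def)
  qed
  have E1: "E1 \<ge> 0" using hw a by (simp add: E1_def)
  have R1: "sqrt((b-a)/b)*((T1+T2)/T2)*(Z2/(Z1+Z2)) powr (3/2) * exp E1 \<ge> sqrt r * \<theta> powr (3/2) * exp E1"
  proof -
    have "sqrt r * \<theta> powr (3/2) * exp E1 * 1 \<le> sqrt r * \<theta> powr (3/2) * exp E1 * ((T1+T2)/T2)"
      using pos r by (intro mult_left_mono) auto
    then show ?thesis by (simp add: r_def \<theta>_def Z_def ac_simps)
  qed
  have R2: "sqrt(a/b)*((T1+T2)/T1)*(Z1/(Z1+Z2)) powr (3/2)*exp E2 \<ge> sqrt \<beta> * (1-\<theta>) powr (3/2) * exp E2"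
  proof -
    have "sqrt \<beta> * (1-\<theta>) powr (3/2) * exp E2 * 1 \<le> sqrt \<beta> * (1-\<theta>) powr (3/2) * exp E2 * ((T1+T2)/T1)"
      using pos be th by (intro mult_left_mono) auto
    then show ?thesis using th(3) by (simp add: \<beta>_def Z_def ac_simps)
  qed
  have main: "1 \<le> D0 * (sqrt r * \<theta> powr (3/2) * exp E1 + sqrt \<beta> * (1-\<theta>) powr (3/2) * exp E2)"
  proof (cases "\<theta> \<ge> r")
    case True
    have "r powr 2 \<le> sqrt r * \<theta> powr (3/2)"
    proof -
      have "r powr 2 = r powr (1/2) * r powr (3/2)" by (simp add: powr_add[symmetric])
      also have "\<dots> \<le> sqrt r * \<theta> powr (3/2)" using True r
        by (simp add: powr_half_sqrt powr_mono2)
      finally show ?thesis .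
    qed
    also have "\<dots> \<le> sqrt r * \<theta> powr (3/2) * exp E1"
    proof -
      have "sqrt r * \<theta> powr (3/2) * 1 \<le> sqrt r * \<theta> powr (3/2) * exp E1"
        using E1 r by (intro mult_left_mono) auto
      then show ?thesis by simp
    qed
    finally have X: "r powr 2 \<le> sqrt r * \<theta> powr (3/2) * exp E1" .
    have "D0 \<ge> (1/r) powr (3/2) * (1/r) powr (3/2)"
      unfolding D0_def using Mr r a by (intro mult_mono powr_mono2) (auto simp: r_def)
    also have "(1/r) powr (3/2) * (1/r) powr (3/2) = (1/r) powr 3" by (simp add: powr_add[symmetric])
    finally have D: "D0 \<ge> (1/r) powr 3" .
    have "1 \<le> (1/r) powr 3 * r powr 2"
    proof -
      have "(1/r) powr 3 * r powr 2 = 1/r" using r by (simp add: powr_divide powr_add[symmetric] powr_diff) (simp add: power2_eq_square power3_eq_cube)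
      then show ?thesis using r by simp
    qed
    also have "\<dots> \<le> D0 * (sqrt r * \<theta> powr (3/2) * exp E1)"
      using D X r D0pos by (intro mult_mono) auto
    also have "\<dots> \<le> D0 * (sqrt r * \<theta> powr (3/2) * exp E1 + sqrt \<beta> * (1-\<theta>) powr (3/2) * exp E2)"
      using D r D0pos be th by (intro mult_left_mono) auto
    finally show ?thesis .
  next
    case False
    define p where "p = \<theta> / r"
    have p: "0 < p" "p < 1" using False th r by (auto simp: p_def)
    have thp: "\<theta> = p * r" using r by (simp add: p_def)
    have p_eq: "p = Z2*b/(Z*(b-a))" using a Z by (simp add: p_def \<theta>_def r_def field_simps)
    have e0: "4*(p*E1 + (1-p)*E2) = (p*a + (1-p)*b)*w1 + p*a*w2 - a*w"
      unfolding E1_def E2_def by (simp add: diff_divide_distrib add_divide_distrib algebra_simps)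
    have pba: "p*(b-a) = Z2*b/Z" using a Z unfolding p_eq by simp
    have "p*a + (1-p)*b = b - p*(b-a)" by (simp add: algebra_simps)
    also have "\<dots> = b*Z1/Z" using Z unfolding pba by (simp add: Z_def field_simps)
    finally have "p*a + (1-p)*b = b*Z1/Z" .
    then have c1: "(p*a + (1-p)*b)*w1 = b*A1\<^sup>2/Z" using pos by (simp add: w1_def)
    have c2: "p*a*w2 = a*b*A2\<^sup>2/((b-a)*Z)" using pos a Z unfolding p_eq w2_def by (simp add: field_simps)
    have c3: "b*A1\<^sup>2/Z + a*b*A2\<^sup>2/((b-a)*Z) - a*w = ((b-a)*A1 - a*A2)\<^sup>2/((b-a)*Z)"
      using a Z unfolding w_def by (simp add: divide_simps) (simp add: power2_eq_square algebra_simps)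
    have "((b-a)*A1 - a*A2)\<^sup>2/((b-a)*Z) \<ge> 0" using a Z by simp
    moreover have "4*(p*E1 + (1-p)*E2) = ((b-a)*A1 - a*A2)\<^sup>2/((b-a)*Z)"
      unfolding e0 c1 c2 c3[symmetric] by simp
    ultimately have "0 \<le> 4*(p*E1 + (1-p)*E2)" by (simp only:)
    then have comb: "p * E1 + (1-p) * E2 \<ge> 0" by (simp only: zero_le_mult_iff) simp
    define X where "X = sqrt r * \<theta> powr (3/2)"
    define Y where "Y = sqrt \<beta> * (1-\<theta>) powr (3/2)"
    have XY: "X > 0" "Y > 0" using r be th by (auto simp: X_def Y_def)
    define u where "u = ln (X/p) + E1"
    define v where "v = ln (Y/(1-p)) + E2"
    have "exp ((1-p) *\<^sub>R v + p *\<^sub>R u) \<le> (1-p) * exp v + p * exp u"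
      using p by (intro convex_onD[OF exp_convex]) auto
    also have "(1-p) * exp v + p * exp u = X * exp E1 + Y * exp E2"
      using p XY by (simp add: u_def v_def exp_add)
    finally have cv: "exp (p * ln (X/p) + (1-p) * ln (Y/(1-p)) + (p * E1 + (1-p) * E2)) \<le> X * exp E1 + Y * exp E2"
      by (simp add: u_def v_def algebra_simps)
    define \<Phi> where "\<Phi> = p * ln (X/p) + (1-p) * ln (Y/(1-p))"
    define Lr where "Lr = ln r"
    define Lb where "Lb = ln \<beta>"
    define lp where "lp = ln p"
    define l1p where "l1p = ln (1-p)"
    define LM where "LM = ln M"
    have lD: "ln D0 = -(3/2)*Lr + (3/2)*LM"
    proof -
      have "b/(b-a) = 1/r" by (simp add: r_def)
      then show ?thesis using a Mpos r unfolding D0_def Lr_def LM_def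
        by (simp add: ln_mult ln_powr ln_div)
    qed
    have lX: "ln X = (1/2)*Lr + (3/2)*(lp + Lr)"
      using r p th unfolding X_def Lr_def lp_def thp by (simp add: ln_mult ln_powr ln_sqrt)
    have "(1-p)*r \<le> 1-\<theta>" using be thp by (simp add: algebra_simps)
    then have "ln ((1-p)*r) \<le> ln (1-\<theta>)" using p r by (intro ln_mono) auto
    then have l1t: "ln (1-\<theta>) \<ge> l1p + Lr" using p r by (simp add: ln_mult l1p_def Lr_def)
    have lY: "ln Y = (1/2)*Lb + (3/2)*ln(1-\<theta>)"
      using be th unfolding Y_def Lb_def by (simp add: ln_mult ln_powr ln_sqrt)
    have A: "p * ln(X/p) = 2*(p*Lr) + (1/2)*(p*lp)"
      using XY p by (simp add: ln_div lX lp_def algebra_simps) (simp add: field_simps)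
    have "ln (Y/(1-p)) \<ge> (1/2)*Lb + (3/2)*Lr + (1/2)*l1p"
      using XY p l1t by (simp add: ln_div lY l1p_def algebra_simps)
    then have B: "(1-p)*ln(Y/(1-p)) \<ge> (1-p)*((1/2)*Lb + (3/2)*Lr + (1/2)*l1p)"
      using p by (intro mult_left_mono) auto
    have B2: "(1-p)*((1/2)*Lb + (3/2)*Lr + (1/2)*l1p) = (1/2)*((1-p)*Lb) + (3/2)*Lr - (3/2)*(p*Lr) + (1/2)*((1-p)*l1p)"
      by (simp add: algebra_simps) (simp add: field_simps)
    have "ln (1/r) \<le> LM" unfolding LM_def using Mr r by (intro ln_mono) auto
    then have LrM: "Lr \<ge> -LM" using r by (simp add: Lr_def ln_div)
    have "ln (1/\<beta>) \<le> LM" unfolding LM_def using Mb be by (intro ln_mono) auto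
    then have LbM: "Lb \<ge> -LM" using be by (simp add: Lb_def ln_div)
    have P1: "p*Lr \<ge> -(p*LM)" using LrM p by (metis minus_mult_right mult_left_mono less_imp_le)
    have P2: "(1-p)*Lb \<ge> -((1-p)*LM)" using LbM p
      by (metis diff_gt_0_iff_gt minus_mult_right mult_left_mono less_imp_le)
    have "ln (1/p) \<le> 1/p - 1" using p by (intro ln_le_minus_one) auto
    then have "p * ln (1/p) \<le> p * (1/p - 1)" using p by (intro mult_left_mono) auto
    then have P3: "p*lp \<ge> p - 1" using p by (simp add: lp_def ln_div algebra_simps)
    have "ln (1/(1-p)) \<le> 1/(1-p) - 1" using p by (intro ln_le_minus_one) auto
    then have "(1-p) * ln (1/(1-p)) \<le> (1-p) * (1/(1-p) - 1)" using p by (intro mult_left_mono) auto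
    then have P4: "(1-p)*l1p \<ge> -p" using p by (simp add: l1p_def ln_div algebra_simps)
    have "ln 2 \<le> LM" unfolding LM_def using M2 by (intro ln_mono) auto
    then have LM2: "LM \<ge> 2/3" using ln2_ge_two_thirds by linarith
    have e1: "p*LM + (1-p)*LM = LM" by (simp add: algebra_simps)
    have key: "ln D0 + \<Phi> \<ge> 0" unfolding \<Phi>_def
      using lD A B B2 P1 P2 P3 P4 LM2 e1 by linarith
    have "1 \<le> exp (ln D0 + \<Phi>)" using key by simp
    also have "\<dots> = D0 * exp \<Phi>" using D0pos by (simp add: exp_add)
    also have "\<dots> \<le> D0 * (X * exp E1 + Y * exp E2)"
    proof -
      have "exp \<Phi> \<le> exp (\<Phi> + (p * E1 + (1-p) * E2))" using comb by simp
      also have "\<dots> \<le> X * exp E1 + Y * exp E2" using cv by (simp add: \<Phi>_def add_ac)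
      finally show ?thesis using D0pos by simp
    qed
    finally show ?thesis by (simp add: X_def Y_def mult.assoc)
  qed
  have "D0 * (sqrt r * \<theta> powr (3/2) * exp E1 + sqrt \<beta> * (1-\<theta>) powr (3/2) * exp E2) \<le>
     D0 * (sqrt((b-a)/b)*((T1+T2)/T2)*(Z2/(Z1+Z2)) powr (3/2) * exp E1
      + sqrt(a/b)*((T1+T2)/T1)*(Z1/(Z1+Z2)) powr (3/2)*exp E2)"
    using R1 R2 by (intro mult_left_mono add_mono) (auto simp: D0_def)
  with main show ?thesis by (simp add: D0_def E1_def E2_def w_def w1_def w2_def Z_def)
qed



lemma rho_eq:
  assumes "c > 0" "s < t" "x < y"
  shows "rho lam del c s x t y = (4*pi) powr (-1/2) * del * sqrt c * (t-s) * (y-x) powr (-3/2)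
     * exp (-(c*(del*(t-s) - 2* sqrt lam*(y-x))\<^sup>2/(4*(y-x))))"
proof -
  define T where "T = t - s"
  define Z where "Z = y - x"
  have T: "T > 0" and Z: "Z > 0" using assms by (auto simp: T_def Z_def)
  have cz: "c*Z > 0" using assms Z by simp
  have p1: "c * (c * (c*Z) powr (-3/2)) = sqrt c * Z powr (-3/2)"
  proof -
    have "c * (c * (c*Z) powr (-3/2)) = c powr 2 * c powr (-3/2) * Z powr (-3/2)"
      using assms Z by (simp add: powr_mult powr_numeral power2_eq_square)
    also have "\<dots> = c powr (1/2) * Z powr (-3/2)" by (simp add: powr_add[symmetric])
    finally show ?thesis using assms by (simp add: powr_half_sqrt)
  qed
  have e: "(del * (c*T) - 2* sqrt lam*(c*Z))\<^sup>2 / (4*(c*Z)) = c*(del*T - 2* sqrt lam*Z)\<^sup>2/(4*Z)"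
    using assms Z by (simp add: power2_eq_square field_simps)
  have "rho lam del c s x t y = c * ((4*pi) powr (-1/2) * del * (c*T) * (c*Z) powr (-3/2)
        * exp (- ((del * (c*T) - 2 * sqrt lam * (c*Z))\<^sup>2) / (4 * (c*Z))))"
    using assms cz by (simp add: rho_def pdens_def T_def Z_def)
  also have "\<dots> = (4*pi) powr (-1/2) * del * T * (c * (c * (c*Z) powr (-3/2)))
        * exp (- ((del * (c*T) - 2 * sqrt lam * (c*Z))\<^sup>2 / (4 * (c*Z))))"
    by (simp add: ac_simps)
  also have "\<dots> = (4*pi) powr (-1/2) * del * sqrt c * T * Z powr (-3/2)
     * exp (-(c*(del*T - 2* sqrt lam*Z)\<^sup>2/(4*Z)))"
    unfolding p1 e by (simp add: ac_simps)
  finally show ?thesis by (simp add: T_def Z_def)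
qed

lemma rho_zero:
  assumes "c > 0" "\<not> (s < t \<and> x < y)"
  shows "rho lam del c s x t y = 0"
  using assms by (auto simp: rho_def pdens_def zero_less_mult_iff)

lemma rho_nonneg:
  assumes "c > 0" "del \<ge> 0"
  shows "rho lam del c s x t y \<ge> 0"
  using assms by (auto simp: rho_def pdens_def)

lemma expa1: "-(b*X1/(4*Z1)) + -(a*X2/(4*Z2)) + a*(X1/Z1 + X2/Z2 - X/Z)/4 = -((b-a)*X1/(4*(Z1::real))) + -(a*X/(4*Z))"
  by (simp add: diff_divide_distrib add_divide_distrib algebra_simps)
lemma expa2: "-(b*X1/(4*Z1)) + -(a*X2/(4*Z2)) + (b*(X1/Z1) - a*(X/Z))/4 = -(a*X2/(4*(Z2::real))) + -(a*X/(4*Z))"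
  by (simp add: diff_divide_distrib add_divide_distrib algebra_simps)

lemma pw:
  assumes lam: "lam \<ge> 0" and del: "del > 0" and a: "0 < a" "a < b"
    and su: "s < u" "u < t" and xz: "x < z" "z < y"
    and M: "M \<ge> b/(b-a)" "M \<ge> b/a"
  shows "rho lam del b s x u z * rho lam del a u z t y \<le>
    ((b/(b-a)) powr (3/2) * M powr (3/2)) * (rho lam del (b-a) s x u z + rho lam del a u z t y) * rho lam del a s x t y"
proof -
  define K where "K = (4*pi) powr (-1/2)"
  define \<mu> where "\<mu> = 2 * sqrt lam"
  define T1 where "T1 = u - s"
  define T2 where "T2 = t - u"
  define Z1 where "Z1 = z - x"
  define Z2 where "Z2 = y - z"
  define A1 where "A1 = del*T1 - \<mu>*Z1"
  define A2 where "A2 = del*T2 - \<mu>*Z2"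
  define D0 where "D0 = (b/(b-a)) powr (3/2) * M powr (3/2)"
  have pos: "T1 > 0" "T2 > 0" "Z1 > 0" "Z2 > 0" using su xz by (auto simp: T1_def T2_def Z1_def Z2_def)
  have ts: "t - s = T1 + T2" "y - x = Z1 + Z2" by (auto simp: T1_def T2_def Z1_def Z2_def)
  have As: "del*(t-s) - \<mu>*(y-x) = A1 + A2" unfolding ts A1_def A2_def by (simp add: algebra_simps)
  define e1 where "e1 = exp (-(b*A1\<^sup>2/(4*Z1)))"
  define e2 where "e2 = exp (-(a*A2\<^sup>2/(4*Z2)))"
  define e3 where "e3 = exp (-((b-a)*A1\<^sup>2/(4*Z1)))"
  define e4 where "e4 = exp (-(a*(A1+A2)\<^sup>2/(4*(Z1+Z2))))"
  have r1: "rho lam del b s x u z = K*del* sqrt b*T1*Z1 powr (-3/2)*e1"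
    using rho_eq[of b s u x z lam del] a su xz unfolding K_def e1_def A1_def T1_def Z1_def \<mu>_def
    by (simp add: mult.assoc)
  have r2: "rho lam del a u z t y = K*del* sqrt a*T2*Z2 powr (-3/2)*e2"
    using rho_eq[of a u t z y lam del] a su xz unfolding K_def e2_def A2_def T2_def Z2_def \<mu>_def
    by (simp add: mult.assoc)
  have r3: "rho lam del (b-a) s x u z = K*del* sqrt (b-a)*T1*Z1 powr (-3/2)*e3"
    using rho_eq[of "b-a" s u x z lam del] a su xz unfolding K_def e3_def A1_def T1_def Z1_def \<mu>_def
    by (simp add: mult.assoc)
  have r4: "rho lam del a s x t y = K*del* sqrt a*(T1+T2)*(Z1+Z2) powr (-3/2)*e4"
    using rho_eq[of a s t x y lam del] a su xz As[symmetric] ts[symmetric] unfolding K_def e4_def \<mu>_def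
    by (simp add: mult.assoc)
  define R1 where "R1 = sqrt((b-a)/b)*((T1+T2)/T2)*(Z2/(Z1+Z2)) powr (3/2) * exp(a*(A1\<^sup>2/Z1+A2\<^sup>2/Z2-(A1+A2)\<^sup>2/(Z1+Z2))/4)"
  define R2 where "R2 = sqrt(a/b)*((T1+T2)/T1)*(Z1/(Z1+Z2)) powr (3/2)*exp((b*(A1\<^sup>2/Z1) - a*((A1+A2)\<^sup>2/(Z1+Z2)))/4)"
  have C: "1 \<le> D0 * (R1 + R2)" unfolding D0_def R1_def R2_def
    by (rule core[OF a pos M])
  define L where "L = rho lam del b s x u z * rho lam del a u z t y"
  have L0: "L \<ge> 0" unfolding L_def using a del by (intro mult_nonneg_nonneg rho_nonneg) auto
  have s1: "sqrt b * sqrt((b-a)/b) = sqrt (b-a)" using a by (simp add: real_sqrt_mult[symmetric])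
  have s2: "sqrt b * sqrt(a/b) = sqrt a" using a by (simp add: real_sqrt_mult[symmetric])
  have g1: "Z2 powr (-3/2) * (Z2/(Z1+Z2)) powr (3/2) = (Z1+Z2) powr (-3/2)"
    using pos by (simp add: powr_divide powr_minus divide_simps)
  have g2: "Z1 powr (-3/2) * (Z1/(Z1+Z2)) powr (3/2) = (Z1+Z2) powr (-3/2)"
    using pos by (simp add: powr_divide powr_minus divide_simps)
  have t1: "T2 * ((T1+T2)/T2) = T1+T2" using pos by simp
  have t2: "T1 * ((T1+T2)/T1) = T1+T2" using pos by simp
  have f1: "b*A1\<^sup>2/(4*Z1) = b/4*(A1\<^sup>2/Z1)" "(b-a)*A1\<^sup>2/(4*Z1) = (b-a)/4*(A1\<^sup>2/Z1)"
    "a*A2\<^sup>2/(4*Z2) = a/4*(A2\<^sup>2/Z2)" "a*(A1+A2)\<^sup>2/(4*(Z1+Z2)) = a/4*((A1+A2)\<^sup>2/(Z1+Z2))" by simp_all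
  have x1: "e1 * e2 * exp(a*(A1\<^sup>2/Z1+A2\<^sup>2/Z2-(A1+A2)\<^sup>2/(Z1+Z2))/4) = e3 * e4"
    unfolding e1_def e2_def e3_def e4_def mult_exp_exp
    by (rule arg_cong[where f=exp], rule expa1)
  have x2: "e1 * e2 * exp((b*(A1\<^sup>2/Z1) - a*((A1+A2)\<^sup>2/(Z1+Z2)))/4) = e2 * e4"
    unfolding e1_def e2_def e3_def e4_def mult_exp_exp
    by (rule arg_cong[where f=exp], rule expa2)
  have LR1: "L * R1 = rho lam del (b-a) s x u z * rho lam del a s x t y"
  proof -
    have "L * R1 = (K*K*del*del*T1* sqrt a*Z1 powr (-3/2)) * (T2 * ((T1+T2)/T2)) * (sqrt b * sqrt((b-a)/b))
       * (Z2 powr (-3/2) * (Z2/(Z1+Z2)) powr (3/2)) * (e1 * e2 * exp(a*(A1\<^sup>2/Z1+A2\<^sup>2/Z2-(A1+A2)\<^sup>2/(Z1+Z2))/4))"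
      unfolding L_def R1_def r1 r2 by (simp only: ac_simps)
    also have "\<dots> = rho lam del (b-a) s x u z * rho lam del a s x t y"
      unfolding t1 s1 g1 x1 r3 r4 by (simp only: ac_simps)
    finally show ?thesis .
  qed
  have LR2: "L * R2 = rho lam del a u z t y * rho lam del a s x t y"
  proof -
    have "L * R2 = (K*K*del*del*T2* sqrt a*Z2 powr (-3/2)) * (T1 * ((T1+T2)/T1)) * (sqrt b * sqrt(a/b))
       * (Z1 powr (-3/2) * (Z1/(Z1+Z2)) powr (3/2)) * (e1 * e2 * exp((b*(A1\<^sup>2/Z1) - a*((A1+A2)\<^sup>2/(Z1+Z2)))/4))"
      unfolding L_def R2_def r1 r2 by (simp only: ac_simps)
    also have "\<dots> = rho lam del a u z t y * rho lam del a s x t y"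
      unfolding t2 s2 g2 x2 r2 r4 by (simp only: ac_simps)
    finally show ?thesis .
  qed
  have "L = L * 1" by simp
  also have "\<dots> \<le> L * (D0 * (R1 + R2))" using L0 C by (intro mult_left_mono) auto
  also have "\<dots> = D0 * (L*R1 + L*R2)" by (simp add: algebra_simps)
  also have "\<dots> = D0 * (rho lam del (b-a) s x u z + rho lam del a u z t y) * rho lam del a s x t y"
    unfolding LR1 LR2 by (simp add: algebra_simps)
  finally show ?thesis unfolding L_def D0_def .
qed


lemma qm2:
  assumes "(\<lambda>(u, z). q u z) \<in> borel_measurable borel"
  shows "(\<lambda>(u, z). (q :: real \<Rightarrow> real \<Rightarrow> ennreal) u z) \<in> borel_measurable (lborel \<Otimes>\<^sub>M lborel)"
proof -
  have e1: "sets (lborel \<Otimes>\<^sub>M lborel) = sets (borel \<Otimes>\<^sub>M borel :: (real \<times> real) measure)"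
    by (rule sets_pair_measure_cong) (rule sets_lborel)+
  have e2: "(borel \<Otimes>\<^sub>M borel :: (real \<times> real) measure) = borel" by (rule borel_prod)
  have "measurable (lborel \<Otimes>\<^sub>M lborel) (borel :: ennreal measure) = measurable (borel :: (real \<times> real) measure) borel"
    by (rule measurable_cong_sets) (simp only: e1 e2)+
  then show ?thesis using assms by simp
qed
lemma lfun_ge:
  assumes al: "\<alpha> > 0"
  shows "lfun \<alpha> \<ge> ln (1 + max \<alpha> (1/\<alpha>))"
proof -
  define f where "f = (\<lambda>\<tau>. ln (1 + \<tau>) - (\<tau> - \<alpha>) / (1 + \<tau>) * ln (\<alpha> * \<tau>))"
  define \<tau>0 where "\<tau>0 = max \<alpha> (1/\<alpha>)"
  have S: "{ln (1 + \<tau>) - (\<tau> - \<alpha>) / (1 + \<tau>) * ln (\<alpha> * \<tau>) | \<tau>. \<tau> \<ge> max \<alpha> (1 / \<alpha>)} = f ` {\<tau>0..}"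
    by (auto simp: f_def \<tau>0_def)
  have t01: "\<tau>0 \<ge> 1"
  proof (cases "\<alpha> \<ge> 1")
    case True then show ?thesis by (simp add: \<tau>0_def)
  next
    case False then have "1/\<alpha> \<ge> 1" using al by simp
    then show ?thesis by (simp add: \<tau>0_def)
  qed
  have bd: "f \<tau> \<le> ln 2 - ln \<alpha> + (1+\<alpha>)*\<alpha>" if "\<tau> \<ge> \<tau>0" for \<tau>
  proof -
    have t1: "\<tau> \<ge> 1" using that t01 by simp
    have at: "\<alpha> * \<tau> \<ge> 1"
    proof -
      have "\<tau> \<ge> 1/\<alpha>" using that by (simp add: \<tau>0_def)
      then show ?thesis using al by (simp add: field_simps)
    qed
    have e: "f \<tau> = ln (1+\<tau>) - ln (\<alpha>*\<tau>) + (1+\<alpha>)/(1+\<tau>) * ln (\<alpha>*\<tau>)"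
      using t1 unfolding f_def by (simp add: field_simps)
    have "ln (1+\<tau>) \<le> ln (2*\<tau>)" using t1 by (intro ln_mono) auto
    then have l1: "ln (1+\<tau>) - ln (\<alpha>*\<tau>) \<le> ln 2 - ln \<alpha>" using t1 al by (simp add: ln_mult)
    have "ln (\<alpha>*\<tau>) \<le> \<alpha>*\<tau>" using ln_le_minus_one[of "\<alpha>*\<tau>"] at by linarith
    then have "(1+\<alpha>)/(1+\<tau>) * ln (\<alpha>*\<tau>) \<le> (1+\<alpha>)/(1+\<tau>) * (\<alpha>*\<tau>)"
      using al t1 by (intro mult_left_mono) auto
    also have "\<dots> = (1+\<alpha>)*\<alpha> * (\<tau>/(1+\<tau>))" by simp
    also have "\<dots> \<le> (1+\<alpha>)*\<alpha> * 1" using al t1 by (intro mult_left_mono) auto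
    finally show ?thesis using e l1 by simp
  qed
  have bdd: "bdd_above (f ` {\<tau>0..})"
    using bd by (intro bdd_aboveI[where M="ln 2 - ln \<alpha> + (1+\<alpha>)*\<alpha>"]) auto
  have eq: "f \<tau>0 = ln (1 + \<tau>0)"
  proof (cases "\<alpha> \<ge> 1/\<alpha>")
    case True then show ?thesis by (simp add: f_def \<tau>0_def)
  next
    case False then show ?thesis using al by (simp add: f_def \<tau>0_def)
  qed
  have "f \<tau>0 \<le> Sup (f ` {\<tau>0..})" using bdd by (intro cSup_upper) auto
  then show ?thesis unfolding lfun_def S using eq by (simp add: \<tau>0_def)
qed

theorem corollary2p3:
  fixes lam del a b \<eta> :: real and Q :: "real \<Rightarrow> real \<Rightarrow> real"
    and q :: "real \<Rightarrow> real \<Rightarrow> ennreal"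
  assumes "lam \<ge> 0" and "del > 0" and "0 < a" and "a < b" and "\<eta> \<ge> 0"
    and "regular_superadditive Q"
    and "(\<lambda>(u, z). q u z) \<in> borel_measurable borel"
    and "\<And>s t x y. s < t \<Longrightarrow> x < y \<Longrightarrow>
      ennreal (Dconst a b) *
        (\<integral>\<^sup>+ u. (\<integral>\<^sup>+ z. (ennreal (rho lam del (b - a) s x u z) + ennreal (rho lam del a u z t y))
                      * q u z \<partial>lborel) * indicator {s<..<t} u \<partial>lborel)
      \<le> ennreal (\<eta> + Q s t)"
  shows "classN (rho lam del b) (rho lam del a) ((b / a) powr (1/2)) \<eta> Q q"
proof -
  note lam = assms(1) and del = assms(2) and a = assms(3,4) and hyp = assms(8)
  note qmb[measurable] = qm2[OF assms(7)]
  define M where "M = 1 + max (a/(b-a)) (1/(a/(b-a)))"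
  define D0 where "D0 = (b/(b-a)) powr (3/2) * M powr (3/2)"
  have M: "M \<ge> b/(b-a)" "M \<ge> b/a"
  proof -
    have "1 + a/(b-a) = b/(b-a)" "1 + 1/(a/(b-a)) = b/a" using a by (auto simp: field_simps)
    then show "M \<ge> b/(b-a)" "M \<ge> b/a" unfolding M_def by auto
  qed
  have "b/a > 0" using a by simp
  then have Mpos: "M > 0" using M by linarith
  have DD: "D0 \<le> Dconst a b"
  proof -
    have "ln M \<le> lfun (a/(b-a))" unfolding M_def using a by (intro lfun_ge) simp
    then have "exp (3/2 * ln M) \<le> exp (3/2 * lfun (a/(b-a)))" by simp
    then have "M powr (3/2) \<le> exp (3/2 * lfun (a/(b-a)))" using Mpos by (simp add: powr_def)
    then show ?thesis unfolding D0_def Dconst_def using a by (intro mult_left_mono) auto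
  qed
  have D0pos: "D0 \<ge> 0" unfolding D0_def by simp
  have C1: "(b/a) powr (1/2) \<ge> 1" using a by (simp add: powr_half_sqrt)
  have kern: "rho lam del b s x t y \<le> (b/a) powr (1/2) * rho lam del a s x t y" for s x t y
  proof (cases "s < t \<and> x < y")
    case True
    define V where "V = (del*(t-s) - 2 * sqrt lam*(y-x))\<^sup>2/(4*(y-x))"
    define K where "K = (4*pi) powr (-1/2) * del * (t-s) * (y-x) powr (-3/2)"
    have V: "V \<ge> 0" using True by (simp add: V_def)
    have K: "K \<ge> 0" using True del by (simp add: K_def)
    have rb: "rho lam del b s x t y = K * sqrt b * exp (-(b*V))"
      using rho_eq[of b s t x y lam del] True a unfolding K_def V_def by (simp add: ac_simps)
    have ra: "rho lam del a s x t y = K * sqrt a * exp (-(a*V))"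
      using rho_eq[of a s t x y lam del] True a unfolding K_def V_def by (simp add: ac_simps)
    have "exp (-(b*V)) \<le> exp (-(a*V))" using V a by (simp add: mult_right_mono)
    then have "K * sqrt b * exp (-(b*V)) \<le> K * sqrt b * exp (-(a*V))" using K a by (intro mult_left_mono) auto
    also have "\<dots> = (b/a) powr (1/2) * (K * sqrt a * exp (-(a*V)))"
      using a by (simp add: powr_half_sqrt real_sqrt_divide)
    finally show ?thesis unfolding rb ra .
  next
    case False
    then show ?thesis using a by (simp add: rho_zero)
  qed
  have integ: "(\<integral>\<^sup>+ u. (\<integral>\<^sup>+ z. ennreal (rho lam del b s x u z) * q u z * ennreal (rho lam del a u z t y) \<partial>lborel)
                    * indicator {s<..<t} u \<partial>lborel)
        \<le> ennreal (\<eta> + Q s t) * ennreal (rho lam del a s x t y)" if st: "s < t" for s t x y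
  proof (cases "x < y")
    case False
    have z0: "\<And>u z. ennreal (rho lam del b s x u z) * q u z * ennreal (rho lam del a u z t y) = 0"
    proof -
      fix u z
      show "ennreal (rho lam del b s x u z) * q u z * ennreal (rho lam del a u z t y) = 0"
      proof (cases "x < z")
        case True then have "\<not> z < y" using False by simp
        then show ?thesis using a by (simp add: rho_zero)
      next
        case False then show ?thesis using a by (simp add: rho_zero)
      qed
    qed
    show ?thesis by (simp only: z0) simp
  next
    case xy: True
    define C where "C = ennreal (D0 * rho lam del a s x t y)"
    define I where "I = (\<lambda>u. \<integral>\<^sup>+ z. (ennreal (rho lam del (b - a) s x u z) + ennreal (rho lam del a u z t y)) * q u z \<partial>lborel)"
    have pt: "ennreal (rho lam del b s x u z) * q u z * ennreal (rho lam del a u z t y)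
        \<le> C * ((ennreal (rho lam del (b - a) s x u z) + ennreal (rho lam del a u z t y)) * q u z)"
      if u: "s < u" "u < t" for u z
    proof (cases "x < z \<and> z < y")
      case True
      have nn: "rho lam del b s x u z \<ge> 0" "rho lam del a u z t y \<ge> 0" "rho lam del (b-a) s x u z \<ge> 0"
        "rho lam del a s x t y \<ge> 0"
        using a del by (auto intro!: rho_nonneg)
      have "rho lam del b s x u z * rho lam del a u z t y \<le>
        D0 * (rho lam del (b-a) s x u z + rho lam del a u z t y) * rho lam del a s x t y"
        unfolding D0_def using pw[OF lam del a u True[THEN conjunct1] True[THEN conjunct2] M] .
      then have "ennreal (rho lam del b s x u z * rho lam del a u z t y) \<le>
        ennreal (D0 * rho lam del a s x t y * (rho lam del (b-a) s x u z + rho lam del a u z t y))"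
        by (intro ennreal_leI) (simp add: ac_simps)
      then have "ennreal (rho lam del b s x u z) * ennreal (rho lam del a u z t y) \<le>
        C * (ennreal (rho lam del (b-a) s x u z) + ennreal (rho lam del a u z t y))"
        unfolding C_def using nn D0pos by (simp add: ennreal_mult' ennreal_plus)
      then have "ennreal (rho lam del b s x u z) * ennreal (rho lam del a u z t y) * q u z \<le>
        C * (ennreal (rho lam del (b-a) s x u z) + ennreal (rho lam del a u z t y)) * q u z"
        by (rule mult_right_mono) simp
      then show ?thesis by (simp add: ac_simps)
    next
      case False
      then have "rho lam del b s x u z = 0 \<or> rho lam del a u z t y = 0" using a u by (auto simp: rho_zero)
      then show ?thesis by auto
    qed
    have "(\<integral>\<^sup>+ u. (\<integral>\<^sup>+ z. ennreal (rho lam del b s x u z) * q u z * ennreal (rho lam del a u z t y) \<partial>lborel)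
                    * indicator {s<..<t} u \<partial>lborel) \<le> (\<integral>\<^sup>+ u. C * I u * indicator {s<..<t} u \<partial>lborel)"
    proof (intro nn_integral_mono)
      fix u
      show "(\<integral>\<^sup>+ z. ennreal (rho lam del b s x u z) * q u z * ennreal (rho lam del a u z t y) \<partial>lborel)
                    * indicator {s<..<t} u \<le> C * I u * indicator {s<..<t} u"
      proof (cases "u \<in> {s<..<t}")
        case True
        have "(\<integral>\<^sup>+ z. ennreal (rho lam del b s x u z) * q u z * ennreal (rho lam del a u z t y) \<partial>lborel)
           \<le> (\<integral>\<^sup>+ z. C * ((ennreal (rho lam del (b - a) s x u z) + ennreal (rho lam del a u z t y)) * q u z) \<partial>lborel)"
          using True by (intro nn_integral_mono pt) auto
        also have "\<dots> = C * I u" unfolding I_def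
          by (rule nn_integral_cmult) (unfold rho_def pdens_def, measurable)
        finally show ?thesis using True by simp
      next
        case False then show ?thesis by simp
      qed
    qed
    also have "\<dots> = C * (\<integral>\<^sup>+ u. I u * indicator {s<..<t} u \<partial>lborel)"
      unfolding mult.assoc I_def by (rule nn_integral_cmult) (unfold rho_def pdens_def, measurable)
    also have "\<dots> = ennreal (rho lam del a s x t y) * (ennreal D0 * (\<integral>\<^sup>+ u. I u * indicator {s<..<t} u \<partial>lborel))"
      unfolding C_def using D0pos a del by (simp add: ennreal_mult' rho_nonneg ac_simps)
    also have "\<dots> \<le> ennreal (rho lam del a s x t y) * (ennreal (Dconst a b) * (\<integral>\<^sup>+ u. I u * indicator {s<..<t} u \<partial>lborel))"
      using DD by (intro mult_left_mono mult_right_mono ennreal_leI) auto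
    also have "\<dots> \<le> ennreal (rho lam del a s x t y) * ennreal (\<eta> + Q s t)"
      using hyp[OF st xy] unfolding I_def by (intro mult_left_mono) auto
    finally show ?thesis by (simp add: ac_simps)
  qed
  show ?thesis unfolding classN_def using C1 assms(5,6,7) kern integ by auto
qed

end
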